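(* Let $G$ be a chordal graph, $p:\wp(V_G)\to\mathbb R$ a $G$-polymatroidal function, and $v_1,\dots,v_n$ an elimination ordering for $G$. For each $i$ let $N_i$ be the set of neighbors of $v_i$ among $v_1,\dots,v_{i-1}$. Then \[ p(V_G)=\sum_{S\subseteq \mathsf{MaxCliques}(G)} -(-1)^{|S|}\,p\big({\textstyle\bigcap}S\big) = \sum_{i=1}^n \Big(p(N_i\cup\{v_i\})-p(N_i)\Big). \]
   Context: Graphs are finite directed graphs; the underlying simple graph $\bar G$ has edges $\{v,w\}$, $v\neq w$, with $(v,w)$ or $(w,v)$ in $E_G$, and cliques, neighbors, chordality, separation refer to $\bar G$. $\mathsf{MaxCliques}(G)$ is the set of maximal cliques; $\bigcap S$ is the intersection of the family $S$, with $\bigcap\emptyset=\emptyset$. $G$ is chordal if $\bar G$ has no induced cycle of length $\ge4$. A vertex is eliminable in $G$ if its neighborhood is a clique; an enumeration $v_1,\dots,v_n$ of $V_G$ is an elimination ordering if $v_j$ is eliminable in the induced subgraph on $\{v_1,\dots,v_j\}$ for each $j$. A function $p:\wp(V_G)\to\mathbb R$ is $G$-polymatroidal if $p(\emptyset)=0$; $p(A)\le p(B)$ for $A\subseteq B$; $p(A\cap B)+p(A\cup B)\le p(A)+p(B)$ for all $A,B$; and $p(A\cap B)+p(A\cup B)=p(A)+p(B)$ whenever there is no edge of $\bar G$ between $A\setminus B$ and $B\setminus A$. *)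

theory Defs
  imports Complex_Main
begin

text \<open>A graph is a pair (V, E) with V finite and E a set of directed edges (pairs) on V.
  All graph notions refer to the underlying simple graph.\<close>

definition adj :: "('a \<times> 'a) set \<Rightarrow> 'a \<Rightarrow> 'a \<Rightarrow> bool" where
  "adj E v w \<longleftrightarrow> v \<noteq> w \<and> ((v, w) \<in> E \<or> (w, v) \<in> E)"

definition is_clique :: "'a set \<Rightarrow> ('a \<times> 'a) set \<Rightarrow> 'a set \<Rightarrow> bool" where
  "is_clique V E C \<longleftrightarrow> C \<subseteq> V \<and> (\<forall>v\<in>C. \<forall>w\<in>C. v \<noteq> w \<longrightarrow> adj E v w)"

definition MaxCliques :: "'a set \<Rightarrow> ('a \<times> 'a) set \<Rightarrow> 'a set set" where
  "MaxCliques V E = {C. is_clique V E C \<and> (\<forall>D. is_clique V E D \<and> C \<subseteq> D \<longrightarrow> D = C)}"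

text \<open>Intersection of a family, with the convention that the empty family has empty intersection.\<close>
definition Inter0 :: "'a set set \<Rightarrow> 'a set" where
  "Inter0 S = (if S = {} then {} else \<Inter>S)"

definition chordal :: "'a set \<Rightarrow> ('a \<times> 'a) set \<Rightarrow> bool" where
  "chordal V E \<longleftrightarrow> \<not> (\<exists>cs. distinct cs \<and> set cs \<subseteq> V \<and> length cs \<ge> 4 \<and>
      (\<forall>i < length cs. \<forall>j < length cs.
         adj E (cs ! i) (cs ! j) \<longleftrightarrow>
           (j = Suc i mod length cs \<or> i = Suc j mod length cs)))"

definition nbrs_in :: "('a \<times> 'a) set \<Rightarrow> 'a set \<Rightarrow> 'a \<Rightarrow> 'a set" where
  "nbrs_in E W v = {w \<in> W. adj E v w}"

definition eliminable_in :: "'a set \<Rightarrow> ('a \<times> 'a) set \<Rightarrow> 'a \<Rightarrow> bool" where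
  "eliminable_in W E v \<longleftrightarrow> is_clique W E (nbrs_in E W v)"

text \<open>An elimination ordering, given as a list enumerating V (v_1 = vs!0, ...).\<close>
definition elimination_ordering :: "'a set \<Rightarrow> ('a \<times> 'a) set \<Rightarrow> 'a list \<Rightarrow> bool" where
  "elimination_ordering V E vs \<longleftrightarrow> distinct vs \<and> set vs = V \<and>
     (\<forall>j < length vs. eliminable_in (set (take (Suc j) vs)) E (vs ! j))"

definition polymatroidal :: "'a set \<Rightarrow> ('a \<times> 'a) set \<Rightarrow> ('a set \<Rightarrow> real) \<Rightarrow> bool" where
  "polymatroidal V E p \<longleftrightarrow>
     p {} = 0 \<and>
     (\<forall>A B. A \<subseteq> B \<and> B \<subseteq> V \<longrightarrow> p A \<le> p B) \<and>
     (\<forall>A B. A \<subseteq> V \<and> B \<subseteq> V \<longrightarrow> p (A \<inter> B) + p (A \<union> B) \<le> p A + p B) \<and>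
     (\<forall>A B. A \<subseteq> V \<and> B \<subseteq> V \<and> (\<forall>a\<in>A - B. \<forall>b\<in>B - A. \<not> adj E a b) \<longrightarrow>
        p (A \<inter> B) + p (A \<union> B) = p A + p B)"

end

theory Submission
  imports Defs
begin

definition hh :: "('a set \<Rightarrow> real) \<Rightarrow> 'a set set \<Rightarrow> 'a set \<Rightarrow> real" where
  "hh p M T = (\<Sum>S\<in>Pow M. (-1) ^ card S * p (T \<inter> \<Inter>S))"

lemma hh_insert:
  assumes "finite M" "K \<notin> M"
  shows "hh p (insert K M) T = hh p M T - hh p M (T \<inter> K)"
proof -
  have disj: "Pow M \<inter> insert K ` Pow M = {}" using assms(2) by auto
  have inj: "inj_on (insert K) (Pow M)" using assms(2)
    by (smt (verit, ccfv_SIG) PowD inj_onI insert_Diff_if insert_absorb insert_ident subset_iff)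
  have "hh p (insert K M) T = (\<Sum>S\<in>Pow M. (-1) ^ card S * p (T \<inter> \<Inter>S))
      + (\<Sum>S\<in>insert K ` Pow M. (-1) ^ card S * p (T \<inter> \<Inter>S))"
    unfolding hh_def Pow_insert using assms(1) disj by (simp add: sum.union_disjoint)
  also have "(\<Sum>S\<in>insert K ` Pow M. (-1) ^ card S * p (T \<inter> \<Inter>S))
      = (\<Sum>S\<in>Pow M. (-1) ^ card (insert K S) * p (T \<inter> \<Inter>(insert K S)))"
    by (simp add: sum.reindex[OF inj])
  also have "\<dots> = (\<Sum>S\<in>Pow M. - ((-1) ^ card S * p ((T \<inter> K) \<inter> \<Inter>S)))"
  proof (rule sum.cong)
    fix S assume "S \<in> Pow M"
    then have "finite S" "K \<notin> S" using assms finite_subset by auto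
    then show "(-1) ^ card (insert K S) * p (T \<inter> \<Inter>(insert K S)) = - ((-1) ^ card S * p ((T \<inter> K) \<inter> \<Inter>S))"
      by (simp add: Int_assoc)
  qed simp
  finally show ?thesis unfolding hh_def by (simp add: sum_negf)
qed

lemma hh_zero:
  assumes "finite M" "C \<in> M" "Q \<subseteq> C"
  shows "hh p M Q = 0"
proof -
  have "M = insert C (M - {C})" using assms by auto
  then have "hh p M Q = hh p (M - {C}) Q - hh p (M - {C}) (Q \<inter> C)"
    by (metis Diff_iff assms(1) finite_Diff hh_insert singletonI)
  then show ?thesis using assms(3) by (simp add: Int_absorb2)
qed

lemma hh_shift:
  assumes "finite M" "\<forall>C\<in>M. C \<subseteq> A" "T \<inter> A = T' \<inter> A"
  shows "hh p M T - hh p M T' = p T - p T'"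
proof -
  have eq: "\<And>X. hh p M X = p X + (\<Sum>S\<in>Pow M - {{}}. (-1) ^ card S * p (X \<inter> \<Inter>S))"
    unfolding hh_def using assms(1) by (subst sum.remove[of _ "{}"]) auto
  have "(\<Sum>S\<in>Pow M - {{}}. (-1) ^ card S * p (T \<inter> \<Inter>S)) = (\<Sum>S\<in>Pow M - {{}}. (-1) ^ card S * p (T' \<inter> \<Inter>S))"
  proof (rule sum.cong)
    fix S assume S: "S \<in> Pow M - {{}}"
    then have "\<Inter>S \<subseteq> A" using assms(2) by blast
    then have "T \<inter> \<Inter>S = T' \<inter> \<Inter>S" using assms(3) by blast
    then show "(-1) ^ card S * p (T \<inter> \<Inter>S) = (-1) ^ card S * p (T' \<inter> \<Inter>S)" by simp
  qed simp
  then show ?thesis using eq[of T] eq[of T'] by simp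
qed

lemma adj_sym: "adj E a b = adj E b a" unfolding adj_def by auto

lemma maxcl_sub: "C \<in> MaxCliques W E \<Longrightarrow> C \<subseteq> W"
  by (simp add: MaxCliques_def is_clique_def)

lemma finite_maxcl: "finite W \<Longrightarrow> finite (MaxCliques W E)"
  by (rule finite_subset[of _ "Pow W"]) (auto dest: maxcl_sub)

lemma exists_maxcl:
  assumes "finite W" "is_clique W E Q"
  shows "\<exists>C\<in>MaxCliques W E. Q \<subseteq> C"
proof -
  let ?A = "{D. is_clique W E D \<and> Q \<subseteq> D}"
  have "finite ?A" by (rule finite_subset[of _ "Pow W"]) (auto simp: is_clique_def assms(1))
  moreover have "?A \<noteq> {}" using assms(2) by auto
  ultimately obtain m where m: "m \<in> ?A" "\<forall>b\<in>?A. m \<subseteq> b \<longrightarrow> m = b"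
    using finite_has_maximal by (metis (no_types, lifting))
  then have "m \<in> MaxCliques W E" unfolding MaxCliques_def by auto
  then show ?thesis using m by auto
qed

lemma maxcl_step:
  assumes "v \<notin> W" "is_clique (insert v W) E N" "N = nbrs_in E W v"
  shows "MaxCliques (insert v W) E = insert (insert v N) (MaxCliques W E - {N})"
proof -
  have NW: "N \<subseteq> W" using assms(3) unfolding nbrs_in_def by auto
  have NWc: "is_clique W E N" using assms(2) NW unfolding is_clique_def by auto
  have Kc: "is_clique (insert v W) E (insert v N)"
    using assms(2,3) unfolding is_clique_def nbrs_in_def by (auto simp: adj_sym)
  have vD: "D \<subseteq> insert v N" if "is_clique (insert v W) E D" "v \<in> D" for D
    using that assms(3) unfolding is_clique_def nbrs_in_def by auto
  show ?thesis
  proof (intro equalityI subsetI)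
    fix C assume C: "C \<in> MaxCliques (insert v W) E"
    show "C \<in> insert (insert v N) (MaxCliques W E - {N})"
    proof (cases "v \<in> C")
      case True
      then have "C \<subseteq> insert v N" using vD C unfolding MaxCliques_def by auto
      then have "C = insert v N" using C Kc unfolding MaxCliques_def by auto
      then show ?thesis by simp
    next
      case False
      then have Cc: "is_clique W E C" using C unfolding MaxCliques_def is_clique_def by auto
      have "D = C" if "is_clique W E D" "C \<subseteq> D" for D
      proof -
        have "is_clique (insert v W) E D" using that(1) unfolding is_clique_def by auto
        then show ?thesis using C that(2) unfolding MaxCliques_def by blast
      qed
      then have "C \<in> MaxCliques W E" using Cc unfolding MaxCliques_def by blast
      moreover have "C \<noteq> N"
      proof
        assume "C = N"
        then have "N = insert v N" using C Kc unfolding MaxCliques_def by blast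
        then show False using NW assms(1) by auto
      qed
      ultimately show ?thesis by simp
    qed
  next
    fix C assume C: "C \<in> insert (insert v N) (MaxCliques W E - {N})"
    show "C \<in> MaxCliques (insert v W) E"
    proof (cases "C = insert v N")
      case True
      then show ?thesis using Kc vD unfolding MaxCliques_def by auto
    next
      case False
      then have CM: "C \<in> MaxCliques W E" "C \<noteq> N" using C by auto
      have Cc: "is_clique (insert v W) E C" using CM unfolding MaxCliques_def is_clique_def by auto
      have "D = C" if D: "is_clique (insert v W) E D" "C \<subseteq> D" for D
      proof (cases "v \<in> D")
        case True
        then have "D \<subseteq> insert v N" using vD D by auto
        moreover have "v \<notin> C" using CM assms(1) by (auto dest: maxcl_sub)
        ultimately have "C \<subseteq> N" using D by auto
        then have "C = N" using CM NWc unfolding MaxCliques_def by auto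
        then show ?thesis using CM by simp
      next
        case False
        then have "is_clique W E D" using D unfolding is_clique_def by auto
        then show ?thesis using CM D unfolding MaxCliques_def by auto
      qed
      then show ?thesis using Cc unfolding MaxCliques_def by auto
    qed
  qed
qed

lemma main_ind:
  assumes eo: "elimination_ordering V E vs" and p0: "p {} = 0"
  shows "k \<le> length vs \<Longrightarrow> hh p (MaxCliques (set (take k vs)) E) (set (take k vs))
     = p (set (take k vs)) - (\<Sum>i<k. p (nbrs_in E (set (take i vs)) (vs ! i) \<union> {vs ! i})
                               - p (nbrs_in E (set (take i vs)) (vs ! i)))"
proof (induction k)
  case 0
  have "MaxCliques {} E = {{}}" unfolding MaxCliques_def is_clique_def by auto
  then show ?case using p0 by (simp add: hh_def)
next
  case (Suc k)
  define W where "W = set (take k vs)"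
  define v where "v = vs ! k"
  define N where "N = nbrs_in E W v"
  define K where "K = insert v N"
  define M where "M = MaxCliques W E"
  have k: "k < length vs" using Suc by simp
  have W2: "set (take (Suc k) vs) = insert v W"
    unfolding W_def v_def using k by (simp add: take_Suc_conv_app_nth)
  have dist: "distinct vs" using eo unfolding elimination_ordering_def by simp
  have vW: "v \<notin> W" unfolding W_def v_def
  proof (rule notI)
    assume "vs ! k \<in> set (take k vs)"
    then obtain j where j: "j < length (take k vs)" "take k vs ! j = vs ! k" by (auto simp: in_set_conv_nth)
    then have "j < k" "vs ! j = vs ! k" by auto
    then show False using nth_eq_iff_index_eq[OF dist] k by fastforce
  qed
  have "eliminable_in (insert v W) E v" using eo k W2 unfolding elimination_ordering_def v_def by metis
  moreover have "nbrs_in E (insert v W) v = N" unfolding N_def nbrs_in_def adj_def by auto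
  ultimately have Nc: "is_clique (insert v W) E N" unfolding eliminable_in_def by simp
  have NW: "N \<subseteq> W" unfolding N_def nbrs_in_def by auto
  have fW: "finite W" unfolding W_def by simp
  have fM: "finite M" unfolding M_def using fW by (rule finite_maxcl)
  have subM: "\<forall>C\<in>M. C \<subseteq> W" unfolding M_def using maxcl_sub by blast
  let ?M'' = "M - {N}"
  have fM'': "finite ?M''" using fM by simp
  have M2: "MaxCliques (insert v W) E = insert K ?M''"
    unfolding K_def M_def by (rule maxcl_step[OF vW Nc N_def])
  have KM: "K \<notin> ?M''" using subM vW unfolding K_def by auto
  have e1: "hh p (insert K ?M'') (insert v W) = hh p ?M'' (insert v W) - hh p ?M'' K"
    using hh_insert[OF fM'' KM] by (simp add: K_def NW insert_absorb Int_absorb1 insert_mono)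
  have e2: "hh p ?M'' (insert v W) - hh p ?M'' W = p (insert v W) - p W"
    by (rule hh_shift[where A=W]) (use fM subM in auto)
  have e3: "hh p ?M'' K - hh p ?M'' N = p K - p N"
    by (rule hh_shift[where A=W]) (use fM subM vW NW in \<open>auto simp: K_def\<close>)
  have e4: "hh p (insert N ?M'') W = hh p ?M'' W - hh p ?M'' N"
    using hh_insert[of ?M'' N p W] fM NW by (simp add: Int_absorb1)
  have e5: "hh p (insert N ?M'') W = hh p M W"
  proof (cases "N \<in> M")
    case True
    then show ?thesis by (simp add: insert_absorb)
  next
    case False
    have NWc: "is_clique W E N" using Nc NW unfolding is_clique_def by auto
    obtain C where "C \<in> M" "N \<subseteq> C" using exists_maxcl[OF fW NWc] unfolding M_def by auto
    then have "hh p M N = 0" using hh_zero fM by blast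
    then show ?thesis using hh_insert[of M N p W] fM False NW by (simp add: Int_absorb1)
  qed
  have IH: "hh p M W = p W - (\<Sum>i<k. p (nbrs_in E (set (take i vs)) (vs ! i) \<union> {vs ! i})
                               - p (nbrs_in E (set (take i vs)) (vs ! i)))"
    using Suc unfolding M_def W_def by simp
  have "N \<union> {v} = K" unfolding K_def by auto
  then show ?case unfolding W2 M2 using e1 e2 e3 e4 e5 IH
    by (simp add: W_def[symmetric] v_def[symmetric] N_def[symmetric])
qed

lemma telescope:
  assumes eo: "elimination_ordering V E vs" and pm: "polymatroidal V E p"
  shows "k \<le> length vs \<Longrightarrow> p (set (take k vs))
     = (\<Sum>i<k. p (nbrs_in E (set (take i vs)) (vs ! i) \<union> {vs ! i})
                               - p (nbrs_in E (set (take i vs)) (vs ! i)))"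
proof (induction k)
  case 0
  then show ?case using pm unfolding polymatroidal_def by simp
next
  case (Suc k)
  define W where "W = set (take k vs)"
  define v where "v = vs ! k"
  define N where "N = nbrs_in E W v"
  define K where "K = insert v N"
  have k: "k < length vs" using Suc by simp
  have W2: "set (take (Suc k) vs) = insert v W"
    unfolding W_def v_def using k by (simp add: take_Suc_conv_app_nth)
  have dist: "distinct vs" and sV: "set vs = V" using eo unfolding elimination_ordering_def by auto
  have vW: "v \<notin> W" unfolding W_def v_def
  proof (rule notI)
    assume "vs ! k \<in> set (take k vs)"
    then obtain j where j: "j < length (take k vs)" "take k vs ! j = vs ! k" by (auto simp: in_set_conv_nth)
    then have "j < k" "vs ! j = vs ! k" by auto
    then show False using nth_eq_iff_index_eq[OF dist] k by fastforce
  qed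
  have NW: "N \<subseteq> W" unfolding N_def nbrs_in_def by auto
  have WV: "W \<subseteq> V" unfolding W_def using sV by (meson set_take_subset)
  have vV: "v \<in> V" unfolding v_def using sV k by auto
  have mod: "\<forall>A B. A \<subseteq> V \<and> B \<subseteq> V \<and> (\<forall>a\<in>A - B. \<forall>b\<in>B - A. \<not> adj E a b) \<longrightarrow>
        p (A \<inter> B) + p (A \<union> B) = p A + p B" using pm unfolding polymatroidal_def by blast
  have na: "\<forall>a\<in>W - K. \<forall>b\<in>K - W. \<not> adj E a b"
  proof (intro ballI notI)
    fix a b assume a: "a \<in> W - K" and b: "b \<in> K - W" and ab: "adj E a b"
    have "b = v" using b NW unfolding K_def by blast
    then have "a \<in> N" using a ab unfolding N_def nbrs_in_def by (simp add: adj_sym)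
    then show False using a unfolding K_def by blast
  qed
  have KV: "K \<subseteq> V" using vV NW WV unfolding K_def by blast
  have "p (W \<inter> K) + p (W \<union> K) = p W + p K"
    using spec[OF spec[OF mod, of W], of K] na WV KV by blast
  moreover have "W \<inter> K = N" "W \<union> K = insert v W" using NW vW unfolding K_def by auto
  moreover have "N \<union> {v} = K" unfolding K_def by auto
  ultimately show ?case unfolding W2 using Suc
    by (simp add: W_def[symmetric] v_def[symmetric] N_def[symmetric])
qed

theorem lemma2p4:
  fixes V :: "'a set" and E :: "('a \<times> 'a) set" and p :: "'a set \<Rightarrow> real" and vs :: "'a list"
  assumes "finite V" and "E \<subseteq> V \<times> V"
    and "chordal V E"
    and "polymatroidal V E p"
    and "elimination_ordering V E vs"
  shows "p V = (\<Sum>S\<in>Pow (MaxCliques V E). - ((-1) ^ card S) * p (Inter0 S))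
       \<and> (\<Sum>S\<in>Pow (MaxCliques V E). - ((-1) ^ card S) * p (Inter0 S))
           = (\<Sum>i<length vs. p (nbrs_in E (set (take i vs)) (vs ! i) \<union> {vs ! i})
                               - p (nbrs_in E (set (take i vs)) (vs ! i)))"
proof -
  have p0: "p {} = 0" using assms(4) unfolding polymatroidal_def by simp
  have sV: "set vs = V" using assms(5) unfolding elimination_ordering_def by simp
  let ?M = "MaxCliques V E"
  let ?R = "(\<Sum>i<length vs. p (nbrs_in E (set (take i vs)) (vs ! i) \<union> {vs ! i})
                               - p (nbrs_in E (set (take i vs)) (vs ! i)))"
  have fM: "finite ?M" using finite_maxcl[OF assms(1)] .
  have h: "hh p ?M V = p V - ?R" using main_ind[of V E vs p "length vs"] assms(5) p0 sV by simp
  have t: "p V = ?R" using telescope[of V E vs p "length vs"] assms(5) assms(4) sV by simp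
  have eqh: "hh p ?M V = p V + (\<Sum>S\<in>Pow ?M - {{}}. (-1) ^ card S * p (V \<inter> \<Inter>S))"
    unfolding hh_def using fM by (subst sum.remove[of _ "{}"]) auto
  have eqs: "(\<Sum>S\<in>Pow ?M. - ((-1) ^ card S) * p (Inter0 S))
     = (\<Sum>S\<in>Pow ?M - {{}}. - ((-1) ^ card S) * p (Inter0 S))"
    using fM p0 by (subst sum.remove[of _ "{}"]) (auto simp: Inter0_def)
  also have "\<dots> = - (\<Sum>S\<in>Pow ?M - {{}}. (-1) ^ card S * p (V \<inter> \<Inter>S))"
    unfolding sum_negf[symmetric]
  proof (rule sum.cong)
    fix S assume S: "S \<in> Pow ?M - {{}}"
    then have "\<Inter>S \<subseteq> V" using maxcl_sub by blast
    then show "- ((-1) ^ card S) * p (Inter0 S) = - ((-1) ^ card S * p (V \<inter> \<Inter>S))"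
      using S by (simp add: Inter0_def Int_absorb1)
  qed simp
  finally have "(\<Sum>S\<in>Pow ?M. - ((-1) ^ card S) * p (Inter0 S)) = p V - hh p ?M V"
    using eqh by simp
  then show ?thesis using h t by simp
qed

end
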